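(* Let $H\ge 1$ be an integer, $V$ a finite node set with root $r\in V$, and let $(x,l,g)\in\mathcal{P}$, where $\mathcal{P}$ is the polytope defined in the context. Let $v_1,v_2,\ldots,v_{H+1}$ be a directed walk with $H$ arcs (so $v_i\neq v_{i+1}$ for $1\le i\le H$; nodes may repeat otherwise) such that $v_1\neq r$. Then $$\sum_{i=1}^{H} x_{v_i,v_{i+1}}\le H-1.$$
   Context: Setting: $V$ is a finite set of nodes of a complete undirected graph, $r\in V$ is a root, and $H$ is the hop limit. For every ordered pair $(u,v)$ of distinct nodes of $V$ there is a real variable $x_{u,v}$ (arc variable), and for every $v\in V$ and $i\in\{0,\dots,H\}$ there are real variables $l_{v,i}$ ("position of $v$ is less than $i$") and $g_{i,v}$ ("position of $v$ is greater than $i$"). The partial-ordering polytope $\mathcal{P}$ is the set of all $(x,l,g)$ satisfying: (P1) $l_{r,0}=g_{0,r}=0$; (P2) $l_{v,1}=g_{H,v}=0$ for all $v\in V\setminus\{r\}$; (P3) $l_{v,i}-l_{v,i+1}\le 0$ for all $v\in V$, $i=0,\dots,H-1$; (P4) $g_{i,v}+l_{v,i+1}=1$ for all $v\in V$, $i=0,\dots,H-1$; (P5) $l_{u,i}+g_{i,v}\ge x_{u,v}$ for all $u\in V$, $v\in V\setminus\{u\}$, $i=0,\dots,H$; (P6) $\sum_{u\in V\setminus\{v\}}x_{u,v}\le 1$ for all $v\in V$; (P7) $\sum_{u\in V\setminus\{v,w\}}x_{u,v}\ge x_{v,w}$ for all $v\in V\setminus\{r\}$, $w\in V\setminus\{v\}$;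 (P8) $0\le x_{u,v}\le 1$ for all arcs; (P9) $0\le l_{v,i},g_{i,v}\le 1$ for all $v,i$. *)

theory Defs
  imports Complex_Main
begin

text \<open>Membership of (x,l,g) in the partial-ordering polytope P for node set V,
 root r and hop limit H. x u v is the arc variable x_{u,v}, l v i is l_{v,i},
 g i v is g_{i,v}. Only values on V (and indices 0..H) are constrained.\<close>

definition in_PO_polytope ::
  "'a set \<Rightarrow> 'a \<Rightarrow> nat \<Rightarrow> ('a \<Rightarrow> 'a \<Rightarrow> real) \<Rightarrow> ('a \<Rightarrow> nat \<Rightarrow> real) \<Rightarrow> (nat \<Rightarrow> 'a \<Rightarrow> real) \<Rightarrow> bool"
where
  "in_PO_polytope V r H x l g \<longleftrightarrow>
     \<comment> \<open>(P1)\<close>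
     l r 0 = 0 \<and> g 0 r = 0 \<and>
     \<comment> \<open>(P2)\<close>
     (\<forall>v\<in>V - {r}. l v 1 = 0 \<and> g H v = 0) \<and>
     \<comment> \<open>(P3)\<close>
     (\<forall>v\<in>V. \<forall>i<H. l v i - l v (Suc i) \<le> 0) \<and>
     \<comment> \<open>(P4)\<close>
     (\<forall>v\<in>V. \<forall>i<H. g i v + l v (Suc i) = 1) \<and>
     \<comment> \<open>(P5)\<close>
     (\<forall>u\<in>V. \<forall>v\<in>V - {u}. \<forall>i\<le>H. l u i + g i v \<ge> x u v) \<and>
     \<comment> \<open>(P6)\<close>
     (\<forall>v\<in>V. (\<Sum>u\<in>V - {v}. x u v) \<le> 1) \<and>
     \<comment> \<open>(P7)\<close>
     (\<forall>v\<in>V - {r}. \<forall>w\<in>V - {v}. (\<Sum>u\<in>V - {v, w}. x u v) \<ge> x v w) \<and>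
     \<comment> \<open>(P8)\<close>
     (\<forall>u\<in>V. \<forall>v\<in>V - {u}. 0 \<le> x u v \<and> x u v \<le> 1) \<and>
     \<comment> \<open>(P9)\<close>
     (\<forall>v\<in>V. \<forall>i\<le>H. 0 \<le> l v i \<and> l v i \<le> 1 \<and> 0 \<le> g i v \<and> g i v \<le> 1)"

end

theory Submission
  imports Defs
begin

theorem theorem1:
  fixes V :: "'a set" and r :: 'a and H :: nat
    and x :: "'a \<Rightarrow> 'a \<Rightarrow> real" and l :: "'a \<Rightarrow> nat \<Rightarrow> real" and g :: "nat \<Rightarrow> 'a \<Rightarrow> real"
    and w :: "nat \<Rightarrow> 'a"
  assumes "H \<ge> 1"
    and "finite V" and "r \<in> V"
    and "in_PO_polytope V r H x l g"
    and "\<forall>i\<in>{1..H+1}. w i \<in> V"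
    and "\<forall>i\<in>{1..H}. w i \<noteq> w (Suc i)"
    and "w 1 \<noteq> r"
  shows "(\<Sum>i=1..H. x (w i) (w (Suc i))) \<le> real H - 1"
proof -
  note P = assms(4)[unfolded in_PO_polytope_def]
  have P2: "\<And>v. v \<in> V \<Longrightarrow> v \<noteq> r \<Longrightarrow> l v 1 = 0 \<and> g H v = 0" using P by blast
  have P3: "\<And>v i. v \<in> V \<Longrightarrow> i < H \<Longrightarrow> l v i - l v (Suc i) \<le> 0" using P by blast
  have P4: "\<And>v i. v \<in> V \<Longrightarrow> i < H \<Longrightarrow> g i v + l v (Suc i) = 1" using P by blast
  have P5: "\<And>u v i. u \<in> V \<Longrightarrow> v \<in> V \<Longrightarrow> v \<noteq> u \<Longrightarrow> i \<le> H \<Longrightarrow> l u i + g i v \<ge> x u v" using P by blast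
  have P8: "\<And>u v. u \<in> V \<Longrightarrow> v \<in> V \<Longrightarrow> v \<noteq> u \<Longrightarrow> x u v \<le> 1" using P by blast
  have P9: "\<And>v i. v \<in> V \<Longrightarrow> i \<le> H \<Longrightarrow> 0 \<le> l v i" using P by blast
  have g0r: "g 0 r = 0" using P by blast
  have wV: "\<And>i. 1 \<le> i \<Longrightarrow> i \<le> H + 1 \<Longrightarrow> w i \<in> V" using assms(5) by auto
  have wd: "w (Suc i) \<noteq> w i" if "1 \<le> i" "i \<le> H" for i
  proof -
    have "i \<in> {1..H}" using that by simp
    then show ?thesis using assms(6) by metis
  qed
  have split: "(\<Sum>i=1..H. x (w i) (w (Suc i))) = (\<Sum>i=1..H-1. x (w i) (w (Suc i))) + x (w H) (w (Suc H))"
  proof -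
    obtain m where m: "H = Suc m" using assms(1) by (cases H) auto
    show ?thesis unfolding m by (simp add: sum.cl_ivl_Suc)
  qed
  show ?thesis
  proof (cases "w (Suc H) = r")
    case True
    have wH: "w H \<in> V" "w H \<noteq> r" using wV[of H] wd[of H] assms(1) True by auto
    have "x (w H) r \<le> l (w H) 0 + g 0 r" using P5[of "w H" r 0] wH assms(3) by auto
    moreover have "l (w H) 0 \<le> 0" using P3[of "w H" 0] P2[of "w H"] wH assms(1) by auto
    ultimately have xl: "x (w H) (w (Suc H)) \<le> 0" using g0r True by simp
    have "(\<Sum>i=1..H-1. x (w i) (w (Suc i))) \<le> (\<Sum>i=1..H-1. 1)"
    proof (rule sum_mono)
      fix i assume i: "i \<in> {1..H-1}"
      show "x (w i) (w (Suc i)) \<le> 1"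
        using P8[of "w i" "w (Suc i)"] wV[of i] wV[of "Suc i"] wd[of i] i by auto
    qed
    then show ?thesis using split xl assms(1) by simp
  next
    case False
    have claim: "k \<le> H - 1 \<Longrightarrow> (\<Sum>i=1..k. x (w i) (w (Suc i))) \<le> real k - l (w (Suc k)) (Suc k)" for k
    proof (induction k)
      case 0
      then show ?case using P2[of "w 1"] wV[of 1] assms(7) by simp
    next
      case (Suc k)
      have a: "x (w (Suc k)) (w (Suc (Suc k))) \<le> l (w (Suc k)) (Suc k) + g (Suc k) (w (Suc (Suc k)))"
        using P5[of "w (Suc k)" "w (Suc (Suc k))" "Suc k"] wV[of "Suc k"] wV[of "Suc (Suc k)"] wd[of "Suc k"] Suc.prems by auto
      have b: "g (Suc k) (w (Suc (Suc k))) + l (w (Suc (Suc k))) (Suc (Suc k)) = 1"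
        using P4[of "w (Suc (Suc k))" "Suc k"] wV[of "Suc (Suc k)"] Suc.prems by auto
      show ?case using Suc.IH Suc.prems a b by simp
    qed
    have c: "(\<Sum>i=1..H-1. x (w i) (w (Suc i))) \<le> real (H - 1) - l (w H) H"
      using claim[of "H-1"] assms(1) by simp
    have d: "x (w H) (w (Suc H)) \<le> l (w H) H + g H (w (Suc H))"
      using P5[of "w H" "w (Suc H)" H] wV[of H] wV[of "Suc H"] wd[of H] assms(1) by auto
    have e: "g H (w (Suc H)) = 0" using P2[of "w (Suc H)"] wV[of "Suc H"] False by auto
    show ?thesis using split c d e assms(1) by (simp add: of_nat_diff)
  qed
qed

end
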